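(* Fix $\alpha>0$. The function $\Psi$ is a strictly convex, strictly increasing on $[0,\infty)$, $C^2$ Young function, and the gauge norm $N_\Psi(f)$ may equivalently be defined as the number $\lambda>0$ with $\int_{\mathbb R}\Psi(f(x)/\lambda)\,dx=1$; this defines a norm. The corresponding Orlicz space satisfies $\mathcal L^\Psi\cong L^2(\mathbb R)\cap L^3(\mathbb R)$ in the sense that $N_\Psi(f)\eqsim\max(\|f\|_{L^2},\|f\|_{L^3})$. Moreover, the estimates $\|f\|_{L^2}\lesssim\alpha^{-1/2}N_\Psi(f)$ and $\|f\|_{L^3}\lesssim N_\Psi(f)$ hold with constants independent of $\alpha>0$.
   Context: $\Psi=\Psi_\alpha$ is the even function with $\Psi(y)=\alpha y^2-\frac13y^3$ for $0\le y<\alpha$ and $\Psi(y)=\frac23\alpha^3+\alpha^2(y-\alpha)+(y-\alpha)^3$ for $y\ge\alpha$. A Young function is an even convex $\Psi:\mathbb R\to[0,\infty)$ with $\Psi(x)=0\iff x=0$, $\Psi(x)/x\to0$ as $x\to0$, $\Psi(x)/x\to\infty$ as $x\to\infty$. $\mathcal L^\Psi=\{f:\int\Psi(af)<\infty\text{ for some }a>0\}$, $N_\Psi(f)=\inf\{\lambda>0:\int\Psi(f/\lambda)\le1\}$. *)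

theory Defs
  imports "HOL-Analysis.Analysis"
begin

definition Psi :: "real \<Rightarrow> real \<Rightarrow> real" where
  "Psi \<alpha> y = (let t = \<bar>y\<bar> in
     if t < \<alpha> then \<alpha> * t^2 - t^3 / 3
     else 2/3 * \<alpha>^3 + \<alpha>^2 * (t - \<alpha>) + (t - \<alpha>)^3)"

definition strictly_convex_on :: "real set \<Rightarrow> (real \<Rightarrow> real) \<Rightarrow> bool" where
  "strictly_convex_on S f \<longleftrightarrow> convex S \<and>
     (\<forall>x\<in>S. \<forall>y\<in>S. \<forall>u. x \<noteq> y \<and> 0 < u \<and> u < 1 \<longrightarrow>
        f (u * x + (1 - u) * y) < u * f x + (1 - u) * f y)"

definition young_function :: "(real \<Rightarrow> real) \<Rightarrow> bool" where
  "young_function \<Psi> \<longleftrightarrow>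
     (\<forall>x. \<Psi> (-x) = \<Psi> x) \<and> convex_on UNIV \<Psi> \<and> (\<forall>x. 0 \<le> \<Psi> x) \<and>
     (\<forall>x. \<Psi> x = 0 \<longleftrightarrow> x = 0) \<and>
     ((\<lambda>x. \<Psi> x / x) \<longlongrightarrow> 0) (at 0) \<and>
     filterlim (\<lambda>x. \<Psi> x / x) at_top at_top"

definition C2 :: "(real \<Rightarrow> real) \<Rightarrow> bool" where
  "C2 f \<longleftrightarrow> (\<exists>f' f''. (\<forall>x. (f has_real_derivative f' x) (at x)) \<and>
                     (\<forall>x. (f' has_real_derivative f'' x) (at x)) \<and>
                     continuous_on UNIV f'')"

definition orlicz :: "(real \<Rightarrow> real) \<Rightarrow> (real \<Rightarrow> real) set" where
  "orlicz \<Psi> = {f. f \<in> borel_measurable lebesgue \<and>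
     (\<exists>a>0. (\<integral>\<^sup>+ x. ennreal (\<Psi> (a * f x)) \<partial>lebesgue) < \<infinity>)}"

definition gauge_norm :: "(real \<Rightarrow> real) \<Rightarrow> (real \<Rightarrow> real) \<Rightarrow> real" where
  "gauge_norm \<Psi> f = Inf {l. l > 0 \<and>
     (\<integral>\<^sup>+ x. ennreal (\<Psi> (f x / l)) \<partial>lebesgue) \<le> 1}"

definition Lp_space :: "real \<Rightarrow> (real \<Rightarrow> real) set" where
  "Lp_space p = {f. f \<in> borel_measurable lebesgue \<and>
     (\<integral>\<^sup>+ x. ennreal (\<bar>f x\<bar> powr p) \<partial>lebesgue) < \<infinity>}"

definition Lp_norm :: "real \<Rightarrow> (real \<Rightarrow> real) \<Rightarrow> real" where
  "Lp_norm p f = (enn2real (\<integral>\<^sup>+ x. ennreal (\<bar>f x\<bar> powr p) \<partial>lebesgue)) powr (1 / p)"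

end

theory Submission
  imports Defs
begin

definition sm :: "real \<Rightarrow> real" where "sm w = w * \<bar>w\<bar>"

lemma DERIV_sm: "(sm has_real_derivative 2 * \<bar>x\<bar>) (at x)"
proof (cases "x = 0")
  case True
  have "((\<lambda>h. (sm (x + h) - sm x) / h) \<longlongrightarrow> 2 * \<bar>x\<bar>) (at 0)"
  proof -
    have "((\<lambda>h::real. \<bar>h\<bar>) \<longlongrightarrow> 0) (at 0)"
      using tendsto_rabs[OF tendsto_ident_at[of 0 UNIV]] by simp
    moreover have "eventually (\<lambda>h. \<bar>h\<bar> = (sm (x + h) - sm x) / h) (at 0)"
      by (rule always_eventually) (auto simp: True sm_def)
    ultimately show ?thesis using True by (simp add: tendsto_cong)
  qed
  then show ?thesis by (simp add: DERIV_def)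
next
  case False
  show ?thesis
  proof (cases "x > 0")
    case True
    have "((\<lambda>w. w * w) has_real_derivative 2 * \<bar>x\<bar>) (at x)"
      using True by (auto intro!: derivative_eq_intros)
    then show ?thesis
      by (rule has_field_derivative_transform_within_open[where S="{0<..}"]) (auto simp: True sm_def)
  next
    case False2: False
    have "((\<lambda>w. - (w * w)) has_real_derivative 2 * \<bar>x\<bar>) (at x)"
      using False False2 by (auto intro!: derivative_eq_intros)
    then show ?thesis
      by (rule has_field_derivative_transform_within_open[where S="{..<0}"])
         (use False False2 in \<open>auto simp: sm_def\<close>)
  qed
qed

lemma DERIV_sm_chain[derivative_intros]:
  "(f has_real_derivative f') (at x within s) \<Longrightarrow>
   ((\<lambda>x. sm (f x)) has_real_derivative 2 * \<bar>f x\<bar> * f') (at x within s)"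
  using DERIV_chain2[OF DERIV_sm] by blast

definition PP :: "real \<Rightarrow> real \<Rightarrow> real" where
  "PP a y = a * y^2 - (1/3) * (y * sm y) + (2/3) * ((y - a)^3 + (y - a) * sm (y - a) + (- y - a)^3 + (- y - a) * sm (- y - a))"
definition dP :: "real \<Rightarrow> real \<Rightarrow> real" where
  "dP a y = -6 * a * y - sm y + 2 * sm (y - a) - 2 * sm (- y - a)"
definition ddP :: "real \<Rightarrow> real \<Rightarrow> real" where
  "ddP a y = -6 * a - 2 * \<bar>y\<bar> + 4 * \<bar>y - a\<bar> + 4 * \<bar>y + a\<bar>"

lemma Psi_PP: assumes "0 < a" shows "Psi a y = PP a y"
  using assms unfolding Psi_def PP_def sm_def Let_def
  by (cases "y \<ge> a"; cases "y \<ge> 0"; cases "y \<ge> -a") (auto simp: abs_if power2_eq_square power3_eq_cube field_simps)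

lemma Psi_fun: assumes "0 < a" shows "Psi a = PP a"
  using Psi_PP[OF assms] by auto

lemma DERIV_PP: "(PP a has_real_derivative dP a y) (at y)"
  unfolding PP_def [abs_def]
  apply (rule derivative_eq_intros refl | rule refl)+
  apply (simp add: dP_def sm_def power2_eq_square field_simps)
  done

lemma DERIV_dP: "(dP a has_real_derivative ddP a y) (at y)"
  unfolding dP_def [abs_def]
  apply (rule derivative_eq_intros refl | rule refl)+
  apply (simp add: ddP_def sm_def field_simps)
  done

lemma dP_nonneg_eq: assumes "0 < a" "0 \<le> y"
  shows "dP a y = (if y < a then 2*a*y - y^2 else 3*y^2 - 6*a*y + 4*a^2)"
  using assms unfolding dP_def sm_def
  by (auto simp: abs_if power2_eq_square algebra_simps)

lemma dP_odd: "dP a (- y) = - dP a y"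
  unfolding dP_def sm_def by (auto simp: algebra_simps)

lemma dP_mono_pos: assumes "0 < a" "0 \<le> x" "x < y" shows "dP a x < dP a y"
proof -
  consider "y < a" | "x < a" "a \<le> y" | "a \<le> x" using assms by linarith
  then show ?thesis
  proof cases
    case 1
    have "0 < (y - x) * (2*a - x - y)" using 1 assms by (intro mult_pos_pos) auto
    then show ?thesis using 1 assms by (simp add: dP_nonneg_eq power2_eq_square algebra_simps)
  next
    case 2
    have "0 < (a - x)^2" using 2 by simp
    moreover have "0 \<le> (y - a)^2" by simp
    ultimately show ?thesis using 2 assms by (simp add: dP_nonneg_eq power2_eq_square algebra_simps)
  next
    case 3
    have "0 < (y - x) * (3*(x + y) - 6*a)" using 3 assms by (intro mult_pos_pos) auto
    then show ?thesis using 3 assms by (simp add: dP_nonneg_eq power2_eq_square algebra_simps)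
  qed
qed

lemma dP_zero: "dP a 0 = 0" unfolding dP_def sm_def by simp

lemma dP_mono: assumes "0 < a" "x < y" shows "dP a x < dP a y"
proof -
  consider "0 \<le> x" | "x < 0" "0 \<le> y" | "y < 0" using assms by linarith
  then show ?thesis
  proof cases
    case 1 then show ?thesis using dP_mono_pos assms by blast
  next
    case 2
    have "dP a 0 < dP a (-x)" using dP_mono_pos[of a 0 "-x"] 2 assms by simp
    moreover have "dP a 0 \<le> dP a y" using dP_mono_pos[of a 0 y] 2 assms by (cases "y = 0") auto
    ultimately show ?thesis by (simp add: dP_odd dP_zero)
  next
    case 3
    have "dP a (-y) < dP a (-x)" using dP_mono_pos[of a "-y" "-x"] 3 assms by simp
    then show ?thesis by (simp add: dP_odd)
  qed
qed

lemma Psi_even: "Psi a (- y) = Psi a y" unfolding Psi_def by simp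
lemma Psi_abs: "Psi a \<bar>y\<bar> = Psi a y" unfolding Psi_def by simp
lemma Psi_0: "0 < a \<Longrightarrow> Psi a 0 = 0" unfolding Psi_def by simp

lemma Psi_bounds_nonneg: assumes "0 < a" "0 \<le> t"
  shows "(a * t^2 + t^3) / 6 \<le> Psi a t \<and> Psi a t \<le> a * t^2 + t^3"
proof (cases "t < a")
  case True
  have e: "Psi a t = a * t^2 - t^3/3" using True assms unfolding Psi_def by simp
  have "t * (t * t) \<le> a * (t * t)" using True assms
    by (intro mult_right_mono) auto
  then have "t^3 \<le> a * t^2" by (simp add: power2_eq_square power3_eq_cube)
  moreover have "0 \<le> t^3" using assms by simp
  moreover have "\<And>X Y::real. X \<le> Y \<Longrightarrow> 0 \<le> X \<Longrightarrow> (Y+X)/6 \<le> Y - X/3 \<and> Y - X/3 \<le> Y+X"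
    by auto
  ultimately have "(a*t^2+t^3)/6 \<le> a*t^2 - t^3/3 \<and> a*t^2 - t^3/3 \<le> a*t^2+t^3"
    by blast
  then show ?thesis unfolding e by blast
next
  case False
  define s where "s = t - a"
  have s0: "0 \<le> s" using False s_def by simp
  have t: "t = a + s" using s_def by simp
  have e: "Psi a t = 2/3 * a^3 + a^2 * s + s^3" using False assms unfolding Psi_def s_def by simp
  have h1: "0 \<le> s * ((a - 2 * s) * (a - 2 * s))" using s0 by simp
  have h2: "0 \<le> a * s * s" using s0 assms by simp
  have h3: "0 \<le> a * a * s" using s0 assms by simp
  have h4: "0 \<le> a * a * a" using assms by simp
  have h5: "0 \<le> s * s * s" using s0 by simp
  show ?thesis unfolding e unfolding t using h1 h2 h3 h4 h5
    by (simp add: power2_eq_square power3_eq_cube algebra_simps)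
qed

definition Q :: "real \<Rightarrow> real \<Rightarrow> real" where "Q a y = a * y^2 + \<bar>y\<bar>^3"

lemma Psi_lower: "0 < a \<Longrightarrow> Q a y / 6 \<le> Psi a y"
  using Psi_bounds_nonneg[of a "\<bar>y\<bar>"] by (simp add: Psi_abs Q_def)
lemma Psi_upper: "0 < a \<Longrightarrow> Psi a y \<le> Q a y"
  using Psi_bounds_nonneg[of a "\<bar>y\<bar>"] by (simp add: Psi_abs Q_def)
lemma Q_nonneg: "0 < a \<Longrightarrow> 0 \<le> Q a y" unfolding Q_def by simp
lemma Q_pos: "0 < a \<Longrightarrow> y \<noteq> 0 \<Longrightarrow> 0 < Q a y" unfolding Q_def
  by (simp add: add_pos_nonneg)
lemma Psi_nonneg: "0 < a \<Longrightarrow> 0 \<le> Psi a y"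
  using Psi_lower[of a y] Q_nonneg[of a y] by linarith
lemma Psi_pos: "0 < a \<Longrightarrow> y \<noteq> 0 \<Longrightarrow> 0 < Psi a y"
  using Psi_lower[of a y] Q_pos[of a y] by linarith

lemma DERIV_Psi: "0 < a \<Longrightarrow> (Psi a has_real_derivative dP a y) (at y)"
  using DERIV_PP Psi_fun by metis

lemma cont_Psi: "0 < a \<Longrightarrow> continuous_on S (Psi a)"
  by (meson DERIV_Psi DERIV_continuous continuous_at_imp_continuous_on)

lemma Psi_strict_mono: assumes "0 < a" "0 \<le> x" "x < y" shows "Psi a x < Psi a y"
proof (rule DERIV_pos_imp_increasing_open[OF assms(3)])
  fix z assume "x < z" "z < y"
  then have "dP a 0 < dP a z" using dP_mono assms by auto
  then show "\<exists>d. (Psi a has_real_derivative d) (at z) \<and> 0 < d"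
    using DERIV_Psi[OF assms(1)] dP_zero by auto
qed (use cont_Psi assms in auto)

lemma Psi_mono_abs: assumes "0 < a" "\<bar>x\<bar> \<le> \<bar>y\<bar>" shows "Psi a x \<le> Psi a y"
  using Psi_strict_mono[of a "\<bar>x\<bar>" "\<bar>y\<bar>"] assms
  by (cases "\<bar>x\<bar> = \<bar>y\<bar>") (auto simp: Psi_abs[symmetric, of a x] Psi_abs[symmetric, of a y])

lemma Psi_strict_conv_lt: assumes a: "0 < a" and xy: "x < y" and u: "0 < u" "u < 1"
  shows "Psi a (u * x + (1 - u) * y) < u * Psi a x + (1 - u) * Psi a y"
proof -
  define z where "z = u * x + (1 - u) * y"
  have zx: "z - x = (1 - u) * (y - x)" unfolding z_def by (simp add: algebra_simps)
  have yz: "y - z = u * (y - x)" unfolding z_def by (simp add: algebra_simps)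
  have "0 < (1 - u) * (y - x)" using xy u by (intro mult_pos_pos) auto
  then have "x < z" using zx by linarith
  have "0 < u * (y - x)" using xy u by (intro mult_pos_pos) auto
  then have "z < y" using yz by linarith
  obtain p where p: "x < p" "p < z" "Psi a z - Psi a x = (z - x) * dP a p"
    using MVT2[OF \<open>x < z\<close>, of "Psi a" "dP a"] DERIV_Psi[OF a] by blast
  obtain q where q: "z < q" "q < y" "Psi a y - Psi a z = (y - z) * dP a q"
    using MVT2[OF \<open>z < y\<close>, of "Psi a" "dP a"] DERIV_Psi[OF a] by blast
  have d: "dP a p < dP a q" using dP_mono[OF a] p q by auto
  have k: "0 < u * (1 - u) * (y - x)" using u xy by (intro mult_pos_pos) auto
  have "u * Psi a x + (1 - u) * Psi a y - Psi a z
      = - u * (Psi a z - Psi a x) + (1 - u) * (Psi a y - Psi a z)" by (simp add: algebra_simps)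
  also have "\<dots> = (u * (1 - u) * (y - x)) * (dP a q - dP a p)"
    unfolding p(3) q(3) zx yz by (simp add: algebra_simps)
  also have "\<dots> > 0" using k d by (simp add: mult_pos_pos)
  finally show ?thesis unfolding z_def by simp
qed

lemma Psi_strictly_convex: assumes a: "0 < a" shows "strictly_convex_on UNIV (Psi a)"
  unfolding strictly_convex_on_def
proof (intro conjI ballI allI impI)
  fix x y u :: real assume h: "x \<noteq> y \<and> 0 < u \<and> u < 1"
  show "Psi a (u * x + (1 - u) * y) < u * Psi a x + (1 - u) * Psi a y"
  proof (cases "x < y")
    case True then show ?thesis using Psi_strict_conv_lt[OF a True] h by auto
  next
    case False
    then have "y < x" using h by auto
    from Psi_strict_conv_lt[OF a this, of "1 - u"] h show ?thesis by (simp add: algebra_simps)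
  qed
qed simp

lemma Psi_convex: assumes a: "0 < a" shows "convex_on UNIV (Psi a)"
  by (rule convex_on_realI[where f'="dP a"]) (use DERIV_Psi[OF a] dP_mono[OF a] in \<open>auto simp: le_less\<close>)

lemma Psi_conv2: assumes a: "0 < a" and u: "0 \<le> u" "u \<le> 1"
  shows "Psi a (u * x + (1 - u) * y) \<le> u * Psi a x + (1 - u) * Psi a y"
proof -
  have "u + (1 - u) = 1" by simp
  from convex_onD[OF Psi_convex[OF a], of "1 - u" x y] u show ?thesis by simp
qed

lemma Psi_shrink: assumes a: "0 < a" and "0 \<le> u" "u \<le> 1" shows "Psi a (u * x) \<le> u * Psi a x"
  using Psi_conv2[OF a assms(2,3), of x 0] by (simp add: Psi_0[OF a])

lemma Psi_h: assumes a: "0 < a" and t: "0 \<le> t" shows "t * dP a t - 4 * Psi a t \<le> 0"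
proof (cases "t < a")
  case True
  have "t * dP a t - 4 * Psi a t = - 2 * a * t^2 + t^3 / 3"
    using True t a by (simp add: dP_nonneg_eq Psi_def power2_eq_square power3_eq_cube algebra_simps)
  moreover have "t * (t * t) \<le> a * (t * t)" using True t by (intro mult_right_mono) auto
  moreover have "0 \<le> a * (t * t)" using a by simp
  ultimately show ?thesis by (simp add: power2_eq_square power3_eq_cube)
next
  case False
  define s where "s = t - a"
  have s0: "0 \<le> s" using False s_def by simp
  have tt: "t = a + s" using s_def by simp
  have "t * dP a t - 4 * Psi a t = - 5/3 * a^3 - 3 * a^2 * s + 3 * a * s^2 - s^3"
    using False t a unfolding tt by (simp add: dP_nonneg_eq Psi_def power2_eq_square power3_eq_cube algebra_simps)
  moreover have "0 \<le> s * ((s - 3/2 * a) * (s - 3/2 * a))" using s0 by simp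
  moreover have "0 \<le> a * a * s" using s0 a by simp
  moreover have "0 \<le> a * a * a" using a by simp
  ultimately show ?thesis by (simp add: power2_eq_square power3_eq_cube algebra_simps)
qed

lemma Psi_delta: assumes a: "0 < a" and m: "1 \<le> m" shows "Psi a (m * y) \<le> m^4 * Psi a y"
proof -
  have main: "Psi a (m * t) \<le> m^4 * Psi a t" if t: "0 < t" for t
  proof -
    define g where "g x = Psi a x / x^4" for x
    have "g (m * t) \<le> g t"
    proof (rule DERIV_nonpos_imp_nonincreasing[of t "m * t" g])
      show "t \<le> m * t" using m t by simp
      fix x assume x: "t \<le> x" "x \<le> m * t"
      then have x0: "0 < x" using t by simp
      have "(g has_real_derivative (dP a x * x^4 - Psi a x * (4 * x^3)) / (x^4 * x^4)) (at x)"
        unfolding g_def[abs_def] using x0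
        by (auto intro!: derivative_eq_intros DERIV_Psi[OF a] simp: power2_eq_square)
      moreover have "(dP a x * x^4 - Psi a x * (4 * x^3)) / (x^4 * x^4) \<le> 0"
      proof -
        have "dP a x * x^4 - Psi a x * (4 * x^3) = x^3 * (x * dP a x - 4 * Psi a x)"
          by (simp add: algebra_simps power3_eq_cube power4_eq_xxxx)
        also have "\<dots> \<le> 0" using Psi_h[OF a, of x] x0 by (simp add: mult_nonneg_nonpos)
        finally have "dP a x * x^4 - Psi a x * (4 * x^3) \<le> 0" .
        moreover have "0 < x^4 * x^4" using x0 by simp
        ultimately show ?thesis by (rule divide_nonpos_pos)
      qed
      ultimately show "\<exists>d. (g has_real_derivative d) (at x) \<and> d \<le> 0" by blast
    qed
    then show ?thesis using t m unfolding g_def by (simp add: field_simps power_mult_distrib)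
  qed
  show ?thesis
  proof (cases "y = 0")
    case True then show ?thesis by (simp add: Psi_0[OF a])
  next
    case False
    have "Psi a (m * y) = Psi a (m * \<bar>y\<bar>)" using m
      by (metis Psi_abs abs_mult abs_of_nonneg order.trans zero_le_one)
    also have "\<dots> \<le> m^4 * Psi a \<bar>y\<bar>" using main False by simp
    finally show ?thesis by (simp add: Psi_abs)
  qed
qed

lemma Psi_C2: assumes a: "0 < a" shows "C2 (Psi a)"
  unfolding C2_def
proof (intro exI conjI allI)
  show "\<And>x. (Psi a has_real_derivative dP a x) (at x)" using DERIV_Psi[OF a] .
  show "\<And>x. (dP a has_real_derivative ddP a x) (at x)" using DERIV_dP .
  show "continuous_on UNIV (ddP a)" unfolding ddP_def[abs_def] by (intro continuous_intros)
qed

lemma Psi_smono: assumes a: "0 < a" shows "strict_mono_on {0..} (Psi a)"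
  by (rule strict_mono_onI) (use Psi_strict_mono[OF a] in auto)

lemma Psi_young: assumes a: "0 < a" shows "young_function (Psi a)"
  unfolding young_function_def
proof (intro conjI allI)
  show "Psi a (- x) = Psi a x" for x by (rule Psi_even)
  show "convex_on UNIV (Psi a)" by (rule Psi_convex[OF a])
  show "0 \<le> Psi a x" for x by (rule Psi_nonneg[OF a])
  show "(Psi a x = 0) = (x = 0)" for x by (cases "x = 0") (use Psi_pos[OF a, of x] Psi_0[OF a] in auto)
  show "((\<lambda>x. Psi a x / x) \<longlongrightarrow> 0) (at 0)"
  proof (rule Lim_null_comparison)
    show "\<forall>\<^sub>F x in at 0. norm (Psi a x / x) \<le> a * \<bar>x\<bar> + x^2"
    proof (rule always_eventually, intro allI)
      fix x :: real
      show "norm (Psi a x / x) \<le> a * \<bar>x\<bar> + x^2"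
      proof (cases "x = 0")
        case True then show ?thesis by simp
      next
        case False
        have "norm (Psi a x / x) = Psi a x / \<bar>x\<bar>" using Psi_nonneg[OF a, of x] by simp
        also have "\<dots> \<le> Q a x / \<bar>x\<bar>" using Psi_upper[OF a, of x] False
          by (simp add: divide_right_mono)
        also have "\<dots> = a * \<bar>x\<bar> + x^2" using False unfolding Q_def
          by (simp add: field_simps power2_eq_square power3_eq_cube)
        finally show ?thesis .
      qed
    qed
    show "((\<lambda>x. a * \<bar>x\<bar> + x^2) \<longlongrightarrow> 0) (at 0)"
      by (rule tendsto_eq_intros refl | simp)+
  qed
  show "filterlim (\<lambda>x. Psi a x / x) at_top at_top"
  proof (rule filterlim_at_top_mono)
    show "LIM x at_top. (1/6) * (x::real) :> at_top"
      by (rule filterlim_tendsto_pos_mult_at_top[OF tendsto_const]) (auto simp: filterlim_ident)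
    show "\<forall>\<^sub>F x in at_top. (1/6) * x \<le> Psi a x / x"
      using eventually_ge_at_top[of "1::real"]
    proof (rule eventually_mono)
      fix x :: real assume x: "1 \<le> x"
      have e: "Q a x / 6 / x = (1/6) * (a * x) + (1/6) * (x * x)" using x unfolding Q_def
        by (simp add: field_simps power2_eq_square power3_eq_cube)
      have "x \<le> x * x" using x by simp
      moreover have "0 \<le> a * x" using x a by simp
      ultimately have "(1/6) * x \<le> Q a x / 6 / x" unfolding e by linarith
      also have "\<dots> \<le> Psi a x / x" using Psi_lower[OF a, of x] x by (intro divide_right_mono) auto
      finally show "(1/6) * x \<le> Psi a x / x" .
    qed
  qed
qed

lemma Psi_meas[measurable]: "Psi a \<in> borel_measurable borel"
  unfolding Psi_def[abs_def] Let_def by measurable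

definition phi :: "real \<Rightarrow> (real \<Rightarrow> real) \<Rightarrow> real \<Rightarrow> ennreal" where
  "phi a f l = (\<integral>\<^sup>+ x. ennreal (Psi a (f x / l)) \<partial>lebesgue)"
definition SS :: "real \<Rightarrow> (real \<Rightarrow> real) \<Rightarrow> real set" where
  "SS a f = {l. l > 0 \<and> phi a f l \<le> 1}"
definition IA :: "(real \<Rightarrow> real) \<Rightarrow> ennreal" where
  "IA f = (\<integral>\<^sup>+ x. ennreal (\<bar>f x\<bar> powr 2) \<partial>lebesgue)"
definition IB :: "(real \<Rightarrow> real) \<Rightarrow> ennreal" where
  "IB f = (\<integral>\<^sup>+ x. ennreal (\<bar>f x\<bar> powr 3) \<partial>lebesgue)"

lemma gauge_SS: "gauge_norm (Psi a) f = Inf (SS a f)"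
  unfolding gauge_norm_def SS_def phi_def by simp

lemma abs_powr2: "\<bar>y::real\<bar> powr 2 = y^2" by simp
lemma abs_powr3: "\<bar>y::real\<bar> powr 3 = \<bar>y\<bar>^3" by simp

lemma enn_mult_le: "0 \<le> k \<Longrightarrow> 0 \<le> v \<Longrightarrow> k * v \<le> w \<Longrightarrow> ennreal k * ennreal v \<le> ennreal w"
  by (metis ennreal_leI ennreal_mult)

lemma enn_sum_eq: "0 \<le> k1 \<Longrightarrow> 0 \<le> v1 \<Longrightarrow> 0 \<le> k2 \<Longrightarrow> 0 \<le> v2 \<Longrightarrow>
  ennreal (k1 * v1 + k2 * v2) = ennreal k1 * ennreal v1 + ennreal k2 * ennreal v2"
  by (simp add: ennreal_plus ennreal_mult)

lemma pw_low2: assumes a: "0 < a" and l: "0 < l"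
  shows "a / (6 * l^2) * (\<bar>y\<bar> powr 2) \<le> Psi a (y / l)"
proof -
  have "a / (6 * l^2) * (\<bar>y\<bar> powr 2) = (a * (y/l)^2) / 6"
    using l by (simp add: power_divide)
  also have "\<dots> \<le> Q a (y / l) / 6" unfolding Q_def by (simp add: divide_right_mono)
  also have "\<dots> \<le> Psi a (y / l)" using Psi_lower[OF a] .
  finally show ?thesis .
qed

lemma pw_low3: assumes a: "0 < a" and l: "0 < l"
  shows "1 / (6 * l^3) * (\<bar>y\<bar> powr 3) \<le> Psi a (y / l)"
proof -
  have "1 / (6 * l^3) * (\<bar>y\<bar> powr 3) = (\<bar>y/l\<bar>^3) / 6"
    using l by (simp add: power_divide)
  also have "\<dots> \<le> Q a (y / l) / 6" unfolding Q_def using a by (simp add: divide_right_mono)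
  also have "\<dots> \<le> Psi a (y / l)" using Psi_lower[OF a] .
  finally show ?thesis .
qed

lemma pw_up: assumes a: "0 < a" and l: "0 < l"
  shows "Psi a (y / l) \<le> a / l^2 * (\<bar>y\<bar> powr 2) + 1 / l^3 * (\<bar>y\<bar> powr 3)"
proof -
  have "Psi a (y / l) \<le> Q a (y / l)" using Psi_upper[OF a] .
  also have "\<dots> = a / l^2 * (\<bar>y\<bar> powr 2) + 1 / l^3 * (\<bar>y\<bar> powr 3)"
    using l unfolding Q_def by (simp add: power_divide)
  finally show ?thesis .
qed

lemma int_low2: assumes a: "0 < a" and l: "0 < l" and f: "f \<in> borel_measurable lebesgue"
  shows "ennreal (a / (6 * l^2)) * IA f \<le> phi a f l"
proof -
  have "ennreal (a / (6 * l^2)) * IA f = (\<integral>\<^sup>+ x. ennreal (a / (6 * l^2)) * ennreal (\<bar>f x\<bar> powr 2) \<partial>lebesgue)"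
    unfolding IA_def by (rule nn_integral_cmult[symmetric]) (use f in measurable)
  also have "\<dots> \<le> phi a f l" unfolding phi_def
    by (rule nn_integral_mono, rule enn_mult_le) (use pw_low2[OF a l] a l in auto)
  finally show ?thesis .
qed

lemma int_low3: assumes a: "0 < a" and l: "0 < l" and f: "f \<in> borel_measurable lebesgue"
  shows "ennreal (1 / (6 * l^3)) * IB f \<le> phi a f l"
proof -
  have "ennreal (1 / (6 * l^3)) * IB f = (\<integral>\<^sup>+ x. ennreal (1 / (6 * l^3)) * ennreal (\<bar>f x\<bar> powr 3) \<partial>lebesgue)"
    unfolding IB_def by (rule nn_integral_cmult[symmetric]) (use f in measurable)
  also have "\<dots> \<le> phi a f l" unfolding phi_def
    by (rule nn_integral_mono, rule enn_mult_le) (use pw_low3[OF a l] a l in auto)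
  finally show ?thesis .
qed

lemma int_up: assumes a: "0 < a" and l: "0 < l" and f: "f \<in> borel_measurable lebesgue"
  shows "phi a f l \<le> ennreal (a / l^2) * IA f + ennreal (1 / l^3) * IB f"
proof -
  have "phi a f l \<le> (\<integral>\<^sup>+ x. ennreal (a / l^2) * ennreal (\<bar>f x\<bar> powr 2) + ennreal (1 / l^3) * ennreal (\<bar>f x\<bar> powr 3) \<partial>lebesgue)"
    unfolding phi_def
  proof (rule nn_integral_mono)
    fix x
    have "ennreal (Psi a (f x / l)) \<le> ennreal (a / l^2 * (\<bar>f x\<bar> powr 2) + 1 / l^3 * (\<bar>f x\<bar> powr 3))"
      by (rule ennreal_leI) (rule pw_up[OF a l])
    also have "\<dots> = ennreal (a / l^2) * ennreal (\<bar>f x\<bar> powr 2) + ennreal (1 / l^3) * ennreal (\<bar>f x\<bar> powr 3)"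
      using a l by (intro enn_sum_eq) auto
    finally show "ennreal (Psi a (f x / l)) \<le> ennreal (a / l^2) * ennreal (\<bar>f x\<bar> powr 2) + ennreal (1 / l^3) * ennreal (\<bar>f x\<bar> powr 3)" .
  qed
  also have "\<dots> = (\<integral>\<^sup>+ x. ennreal (a / l^2) * ennreal (\<bar>f x\<bar> powr 2) \<partial>lebesgue) + (\<integral>\<^sup>+ x. ennreal (1 / l^3) * ennreal (\<bar>f x\<bar> powr 3) \<partial>lebesgue)"
  proof (rule nn_integral_add)
    show "(\<lambda>x. ennreal (a / l^2) * ennreal (\<bar>f x\<bar> powr 2)) \<in> borel_measurable lebesgue" using f by measurable
    show "(\<lambda>x. ennreal (1 / l^3) * ennreal (\<bar>f x\<bar> powr 3)) \<in> borel_measurable lebesgue" using f by measurable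
  qed
  also have "\<dots> = ennreal (a / l^2) * IA f + ennreal (1 / l^3) * IB f"
  proof -
    have m2: "(\<lambda>x. ennreal (\<bar>f x\<bar> powr 2)) \<in> borel_measurable lebesgue" using f by measurable
    have m3: "(\<lambda>x. ennreal (\<bar>f x\<bar> powr 3)) \<in> borel_measurable lebesgue" using f by measurable
    show ?thesis unfolding IA_def IB_def
      using nn_integral_cmult[OF m2, of "ennreal (a / l^2)"] nn_integral_cmult[OF m3, of "ennreal (1 / l^3)"]
      by (simp only:)
  qed
  finally show ?thesis .
qed

lemma phi_inv: "0 < c \<Longrightarrow> phi a f (1/c) = (\<integral>\<^sup>+ x. ennreal (Psi a (c * f x)) \<partial>lebesgue)"
  unfolding phi_def by (simp add: mult.commute)
lemma enn_fin_of_mult: assumes k: "0 < k" and le: "ennreal k * X \<le> Y" and Y: "Y < \<infinity>" shows "X < \<infinity>"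
proof (cases "X = \<infinity>")
  case True
  have "ennreal k \<noteq> 0" using k by simp
  then have "ennreal k * X = \<infinity>" using True by (simp add: ennreal_mult_top)
  then show ?thesis using le Y by simp
next
  case False then show ?thesis by (simp add: less_top)
qed
lemma orlicz_iff: assumes a: "0 < a"
  shows "f \<in> orlicz (Psi a) \<longleftrightarrow> f \<in> borel_measurable lebesgue \<and> IA f < \<infinity> \<and> IB f < \<infinity>"
proof
  assume "f \<in> orlicz (Psi a)"
  then obtain c where f: "f \<in> borel_measurable lebesgue" and c: "c > 0"
    and fin: "(\<integral>\<^sup>+ x. ennreal (Psi a (c * f x)) \<partial>lebesgue) < \<infinity>"
    unfolding orlicz_def by auto
  have l: "0 < 1/c" using c by simp
  have "phi a f (1/c) < \<infinity>" using fin phi_inv[OF c] by simp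
  moreover have "0 < a / (6 * (1/c)^2)" "0 < 1 / (6 * (1/c)^3)" using a c by auto
  ultimately show "f \<in> borel_measurable lebesgue \<and> IA f < \<infinity> \<and> IB f < \<infinity>"
    using int_low2[OF a l f] int_low3[OF a l f] f enn_fin_of_mult by blast
next
  assume h: "f \<in> borel_measurable lebesgue \<and> IA f < \<infinity> \<and> IB f < \<infinity>"
  have "phi a f 1 \<le> ennreal (a / 1^2) * IA f + ennreal (1 / 1^3) * IB f"
    using int_up[OF a zero_less_one, of f] h by blast
  also have "\<dots> < \<infinity>" using h by (simp add: ennreal_mult_less_top)
  finally have "phi a f 1 < \<infinity>" .
  then show "f \<in> orlicz (Psi a)" unfolding orlicz_def phi_def using h by (auto intro!: exI[of _ 1])
qed

lemma orlicz_Lp: assumes a: "0 < a" shows "orlicz (Psi a) = Lp_space 2 \<inter> Lp_space 3"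
  using orlicz_iff[OF a] unfolding Lp_space_def IA_def IB_def by auto

lemma SS_pos: "l \<in> SS a f \<Longrightarrow> 0 < l" unfolding SS_def by auto

lemma fin_real: "X < \<infinity> \<Longrightarrow> X = ennreal (enn2real X)"
  by (simp add: less_top)

lemma SS_S1: assumes a: "0 < a" and f: "f \<in> borel_measurable lebesgue" "IA f < \<infinity>" "IB f < \<infinity>"
  and l: "0 < l" and le: "a / l^2 * enn2real (IA f) + 1 / l^3 * enn2real (IB f) \<le> 1"
  shows "l \<in> SS a f"
proof -
  have "phi a f l \<le> ennreal (a / l^2) * IA f + ennreal (1 / l^3) * IB f" using int_up[OF a l f(1)] .
  also have "\<dots> = ennreal (a / l^2) * ennreal (enn2real (IA f)) + ennreal (1 / l^3) * ennreal (enn2real (IB f))"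
    using fin_real[OF f(2)] fin_real[OF f(3)] by simp
  also have "\<dots> = ennreal (a / l^2 * enn2real (IA f) + 1 / l^3 * enn2real (IB f))"
    using a l by (intro enn_sum_eq[symmetric]) auto
  also have "\<dots> \<le> 1" using le by simp
  finally show ?thesis unfolding SS_def using l by auto
qed

lemma SS_S2: assumes a: "0 < a" and f: "f \<in> borel_measurable lebesgue" "IA f < \<infinity>" "IB f < \<infinity>"
  and l: "l \<in> SS a f"
  shows "a / (6 * l^2) * enn2real (IA f) \<le> 1" "1 / (6 * l^3) * enn2real (IB f) \<le> 1"
proof -
  have l0: "0 < l" and p: "phi a f l \<le> 1" using l unfolding SS_def by auto
  have fa: "ennreal (enn2real (IA f)) = IA f" "ennreal (enn2real (IB f)) = IB f"
    using f(2,3) by simp_all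
  have "ennreal (a / (6 * l^2) * enn2real (IA f)) = ennreal (a / (6 * l^2)) * ennreal (enn2real (IA f))"
    by (rule ennreal_mult) (use a l0 in auto)
  also have "\<dots> = ennreal (a / (6 * l^2)) * IA f" using fa by simp
  also have "\<dots> \<le> 1" using int_low2[OF a l0 f(1)] p by simp
  finally show "a / (6 * l^2) * enn2real (IA f) \<le> 1" by simp
  have "ennreal (1 / (6 * l^3) * enn2real (IB f)) = ennreal (1 / (6 * l^3)) * ennreal (enn2real (IB f))"
    by (rule ennreal_mult) (use a l0 in auto)
  also have "\<dots> = ennreal (1 / (6 * l^3)) * IB f" using fa by simp
  also have "\<dots> \<le> 1" using int_low3[OF a l0 f(1)] p by simp
  finally show "1 / (6 * l^3) * enn2real (IB f) \<le> 1" by simp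
qed

lemma SS_up: assumes a: "0 < a" and l: "l \<in> SS a f" and ll: "l \<le> l'" shows "l' \<in> SS a f"
proof -
  have l0: "0 < l" and p: "phi a f l \<le> 1" using l unfolding SS_def by auto
  have "phi a f l' \<le> phi a f l" unfolding phi_def
  proof (rule nn_integral_mono, rule ennreal_leI, rule Psi_mono_abs[OF a])
    fix x show "\<bar>f x / l'\<bar> \<le> \<bar>f x / l\<bar>" using l0 ll
      by (simp add: abs_divide divide_left_mono mult_pos_pos)
  qed
  then show ?thesis using p l0 ll unfolding SS_def by auto
qed

lemma witness_ineq: assumes "0 \<le> (p::real)" "0 \<le> q" "l = 1 + p + q" shows "p / l^2 + q / l^3 \<le> 1"
proof -
  have l1: "1 \<le> l" using assms by linarith
  have h: "1 * l \<le> l * l" using l1 by (intro mult_right_mono) auto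
  then have "l \<le> l^2" by (simp add: power2_eq_square)
  then have "p / l^2 \<le> p / l" using assms l1 by (intro divide_left_mono) auto
  moreover have "1 \<le> l * l" using l1 h by linarith
  then have "1 * l \<le> (l * l) * l" using l1 by (intro mult_right_mono) auto
  then have "l \<le> l^3" by (simp add: power3_eq_cube)
  then have "q / l^3 \<le> q / l" using assms l1 by (intro divide_left_mono) auto
  moreover have "p / l + q / l \<le> 1" using assms l1 by (simp add: add_divide_distrib[symmetric])
  ultimately show ?thesis by linarith
qed

lemma SS_ne: assumes a: "0 < a" and f: "f \<in> borel_measurable lebesgue" "IA f < \<infinity>" "IB f < \<infinity>"
  shows "SS a f \<noteq> {}"
proof -
  define l where "l = 1 + a * enn2real (IA f) + enn2real (IB f)"
  have "0 \<le> a * enn2real (IA f)" using a by simp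
  then have "a * enn2real (IA f) / l^2 + enn2real (IB f) / l^3 \<le> 1"
    by (intro witness_ineq) (auto simp: l_def)
  moreover have "0 < l" unfolding l_def using a by (simp add: add_pos_nonneg)
  ultimately have "l \<in> SS a f" by (intro SS_S1[OF a f]) auto
  then show ?thesis by auto
qed

lemma SS_bdd: "bdd_below (SS a f)"
  by (rule bdd_belowI[of _ 0]) (auto dest: SS_pos)

lemma N_nonneg: assumes "SS a f \<noteq> {}" shows "0 \<le> Inf (SS a f)"
  by (rule cInf_greatest[OF assms]) (auto dest: SS_pos)

lemma SS_gt: assumes a: "0 < a" "SS a f \<noteq> {}" and l: "Inf (SS a f) < l" shows "l \<in> SS a f"
proof -
  obtain x where "x \<in> SS a f" "x < l" using l cInf_less_iff[OF assms(2) SS_bdd] by auto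
  then show ?thesis using SS_up[OF a(1)] by auto
qed

lemma SS_lt: assumes "l < Inf (SS a f)" shows "l \<notin> SS a f"
  using assms cInf_lower[OF _ SS_bdd] by force

lemma lim_le1: fixes r :: real assumes h: "\<And>m. 1 < m \<Longrightarrow> r \<le> m^4" shows "r \<le> 1"
proof -
  have "((\<lambda>m::real. m^4) \<longlongrightarrow> 1^4) (at_right 1)" by (intro tendsto_intros)
  moreover have "eventually (\<lambda>m. r \<le> m^4) (at_right (1::real))"
    by (rule eventually_at_rightI[of 1 2]) (auto intro: h)
  ultimately show ?thesis by (intro tendsto_lowerbound[of "\<lambda>m. m^4" 1 "at_right 1"]) auto
qed

lemma lim_ge1: fixes r :: real assumes h: "\<And>m. 1 < m \<Longrightarrow> 1 \<le> m^4 * r" shows "1 \<le> r"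
proof -
  have "((\<lambda>m::real. m^4 * r) \<longlongrightarrow> 1^4 * r) (at_right 1)" by (intro tendsto_intros)
  moreover have "eventually (\<lambda>m. 1 \<le> m^4 * r) (at_right (1::real))"
    by (rule eventually_at_rightI[of 1 2]) (auto intro: h)
  ultimately show ?thesis by (intro tendsto_lowerbound[of "\<lambda>m. m^4 * r" r "at_right 1"]) auto
qed

lemma phi_scale_up: assumes a: "0 < a" and f: "f \<in> borel_measurable lebesgue" and l: "0 < l" and m: "1 \<le> m"
  shows "phi a f l \<le> ennreal (m^4) * phi a f (l * m)"
proof -
  have "phi a f l \<le> (\<integral>\<^sup>+ x. ennreal (m^4) * ennreal (Psi a (f x / (l * m))) \<partial>lebesgue)"
    unfolding phi_def
  proof (rule nn_integral_mono)
    fix x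
    have "Psi a (f x / l) = Psi a (m * (f x / (l * m)))" using m by (simp add: field_simps)
    also have "\<dots> \<le> m^4 * Psi a (f x / (l * m))" by (rule Psi_delta[OF a m])
    finally show "ennreal (Psi a (f x / l)) \<le> ennreal (m^4) * ennreal (Psi a (f x / (l * m)))"
      using Psi_nonneg[OF a] m by (simp add: ennreal_mult[symmetric] ennreal_leI)
  qed
  also have "\<dots> = ennreal (m^4) * phi a f (l * m)" unfolding phi_def
    by (rule nn_integral_cmult) (use f in measurable)
  finally show ?thesis .
qed

lemma phi_shrink: assumes a: "0 < a" and f: "f \<in> borel_measurable lebesgue" and l: "0 < l" and m: "1 \<le> m"
  shows "phi a f (l * m) \<le> ennreal (1 / m) * phi a f l"
proof -
  have "phi a f (l * m) \<le> (\<integral>\<^sup>+ x. ennreal (1 / m) * ennreal (Psi a (f x / l)) \<partial>lebesgue)"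
    unfolding phi_def
  proof (rule nn_integral_mono)
    fix x
    have "Psi a (f x / (l * m)) = Psi a ((1 / m) * (f x / l))" using m by (simp add: field_simps)
    also have "\<dots> \<le> (1 / m) * Psi a (f x / l)" by (rule Psi_shrink[OF a]) (use m in auto)
    finally show "ennreal (Psi a (f x / (l * m))) \<le> ennreal (1 / m) * ennreal (Psi a (f x / l))"
      using Psi_nonneg[OF a] m by (simp add: ennreal_mult[symmetric] ennreal_leI)
  qed
  also have "\<dots> = ennreal (1 / m) * phi a f l" unfolding phi_def
    by (rule nn_integral_cmult) (use f in measurable)
  finally show ?thesis .
qed

lemma IA_zero_iff: assumes f: "f \<in> borel_measurable lebesgue"
  shows "IA f = 0 \<longleftrightarrow> (AE x in lebesgue. f x = 0)"
proof -
  have "IA f = 0 \<longleftrightarrow> (AE x in lebesgue. ennreal (\<bar>f x\<bar> powr 2) = 0)"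
    unfolding IA_def by (rule nn_integral_0_iff_AE) (use f in measurable)
  also have "\<dots> \<longleftrightarrow> (AE x in lebesgue. f x = 0)"
    by (rule AE_cong) simp
  finally show ?thesis .
qed

lemma IB_zero_iff: assumes f: "f \<in> borel_measurable lebesgue"
  shows "IB f = 0 \<longleftrightarrow> (AE x in lebesgue. f x = 0)"
proof -
  have "IB f = 0 \<longleftrightarrow> (AE x in lebesgue. ennreal (\<bar>f x\<bar> powr 3) = 0)"
    unfolding IB_def by (rule nn_integral_0_iff_AE) (use f in measurable)
  also have "\<dots> \<longleftrightarrow> (AE x in lebesgue. f x = 0)"
    by (rule AE_cong) simp
  finally show ?thesis .
qed

lemma N_zero_iff: assumes a: "0 < a" and f: "f \<in> borel_measurable lebesgue" "IA f < \<infinity>" "IB f < \<infinity>"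
  shows "Inf (SS a f) = 0 \<longleftrightarrow> (AE x in lebesgue. f x = 0)"
proof
  assume N: "Inf (SS a f) = 0"
  have ne: "SS a f \<noteq> {}" using SS_ne[OF a f] .
  have all: "l \<in> SS a f" if "0 < l" for l using SS_gt[OF a ne] N that by simp
  define A where "A = enn2real (IA f)"
  have A0: "0 \<le> A" unfolding A_def by simp
  have "A = 0"
  proof (rule ccontr)
    assume "A \<noteq> 0"
    then have Ap: "0 < A" using A0 by simp
    define l where "l = sqrt (a * A / 12)"
    have l0: "0 < l" unfolding l_def using a Ap by simp
    have l2: "l^2 = a * A / 12" unfolding l_def using a Ap by simp
    have "a / (6 * l^2) * A \<le> 1" using SS_S2(1)[OF a f all[OF l0]] unfolding A_def .
    moreover have "a / (6 * l^2) * A = 2" unfolding l2 using a Ap by (simp add: field_simps)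
    ultimately show False by simp
  qed
  moreover have "IA f = ennreal A" unfolding A_def by (rule fin_real[OF f(2)])
  ultimately have "IA f = 0" by simp
  then show "AE x in lebesgue. f x = 0" using IA_zero_iff[OF f(1)] by simp
next
  assume ae: "AE x in lebesgue. f x = 0"
  have IA0: "IA f = 0" using ae IA_zero_iff[OF f(1)] by simp
  have IB0: "IB f = 0" using ae IB_zero_iff[OF f(1)] by simp
  have all: "l \<in> SS a f" if "0 < l" for l
    by (rule SS_S1[OF a f that]) (simp add: IA0 IB0)
  have ne: "SS a f \<noteq> {}" using SS_ne[OF a f] .
  have N0: "0 \<le> Inf (SS a f)" using N_nonneg[OF ne] .
  show "Inf (SS a f) = 0"
  proof (rule ccontr)
    assume "Inf (SS a f) \<noteq> 0"
    then have p: "0 < Inf (SS a f)" using N0 by simp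
    have "Inf (SS a f) / 2 \<in> SS a f" using all p by simp
    then have "Inf (SS a f) \<le> Inf (SS a f) / 2" using cInf_lower[OF _ SS_bdd] by blast
    then show False using p by simp
  qed
qed

lemma phi_N_eq1: assumes a: "0 < a" and f: "f \<in> borel_measurable lebesgue" "IA f < \<infinity>" "IB f < \<infinity>"
  and Np: "0 < Inf (SS a f)"
  shows "phi a f (Inf (SS a f)) = 1"
proof -
  define N where "N = Inf (SS a f)"
  have N0: "0 < N" using Np N_def by simp
  have ne: "SS a f \<noteq> {}" using SS_ne[OF a f] .
  have le: "phi a f N \<le> ennreal (m^4)" if m: "1 < m" for m
  proof -
    have "N < N * m" using N0 m by simp
    then have "N * m \<in> SS a f" using SS_gt[OF a ne] N_def by simp
    then have "phi a f (N * m) \<le> 1" unfolding SS_def by simp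
    then have "ennreal (m^4) * phi a f (N * m) \<le> ennreal (m^4)"
      using mult_left_mono[of "phi a f (N * m)" 1 "ennreal (m^4)"] by simp
    moreover have "phi a f N \<le> ennreal (m^4) * phi a f (N * m)"
      using phi_scale_up[OF a f(1) N0] m by simp
    ultimately show ?thesis by (rule order_trans[rotated])
  qed
  have fin: "phi a f N < \<infinity>" using le[of 2] by (simp add: le_less_trans)
  define r where "r = enn2real (phi a f N)"
  have r: "phi a f N = ennreal r" unfolding r_def using fin by simp
  have r0: "0 \<le> r" unfolding r_def by simp
  have "r \<le> 1"
  proof (rule lim_le1)
    fix m :: real assume "1 < m"
    then show "r \<le> m^4" using le[of m] r by (simp add: ennreal_le_iff)
  qed
  moreover have "1 \<le> r"
  proof (rule lim_ge1)
    fix m :: real assume m: "1 < m"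
    define l where "l = N / m"
    have l0: "0 < l" unfolding l_def using N0 m by simp
    have "l < N" unfolding l_def using N0 m by (simp add: divide_less_eq)
    then have "l \<notin> SS a f" using SS_lt N_def by simp
    then have "1 < phi a f l" using l0 unfolding SS_def by auto
    also have "phi a f l \<le> ennreal (m^4) * phi a f (l * m)"
      using phi_scale_up[OF a f(1) l0] m by simp
    also have "l * m = N" unfolding l_def using m by simp
    finally have "1 < ennreal (m^4) * ennreal r" using r by simp
    then have "1 < ennreal (m^4 * r)" using r0 by (simp add: ennreal_mult)
    then show "1 \<le> m^4 * r" by (simp add: ennreal_less_iff less_imp_le)
  qed
  ultimately have "r = 1" by simp
  then show ?thesis using r N_def by simp
qed

lemma phi_unique: assumes a: "0 < a" and f: "f \<in> borel_measurable lebesgue" "IA f < \<infinity>" "IB f < \<infinity>"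
  and Np: "0 < Inf (SS a f)" and l: "0 < l" and p: "phi a f l = 1"
  shows "l = Inf (SS a f)"
proof -
  define N where "N = Inf (SS a f)"
  have N0: "0 < N" using Np N_def by simp
  have pN: "phi a f N = 1" using phi_N_eq1[OF a f Np] N_def by simp
  consider "l < N" | "l = N" | "N < l" by linarith
  then show ?thesis
  proof cases
    case 1
    then have "l \<notin> SS a f" using SS_lt N_def by simp
    then show ?thesis using l p unfolding SS_def by simp
  next
    case 2 then show ?thesis using N_def by simp
  next
    case 3
    define m where "m = l / N"
    have m: "1 < m" unfolding m_def using 3 N0 by simp
    have "phi a f (N * m) \<le> ennreal (1 / m) * phi a f N" using phi_shrink[OF a f(1) N0] m by simp
    also have "N * m = l" unfolding m_def using N0 by simp
    finally have "1 \<le> ennreal (1 / m)" using p pN by simp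
    then have "1 \<le> 1 / m" by (simp add: ennreal_le_iff) 
    then show ?thesis using m by simp
  qed
qed

lemma Psi_abs_eq: "\<bar>u\<bar> = \<bar>v\<bar> \<Longrightarrow> Psi a u = Psi a v"
  by (metis Psi_abs)

lemma Inf_scale: fixes X :: "real set" assumes k: "0 < k" and ne: "X \<noteq> {}" and b: "bdd_below X"
  shows "Inf ((\<lambda>l. k * l) ` X) = k * Inf X"
proof (rule antisym)
  have ne': "(\<lambda>l. k * l) ` X \<noteq> {}" using ne by simp
  have b': "bdd_below ((\<lambda>l. k * l) ` X)"
  proof -
    obtain m where "\<forall>x\<in>X. m \<le> x" using b unfolding bdd_below_def by auto
    then have "\<forall>y\<in>(\<lambda>l. k * l) ` X. k * m \<le> y" using k by auto
    then show ?thesis unfolding bdd_below_def by blast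
  qed
  have "Inf X \<le> x" if "x \<in> X" for x using cInf_lower[OF that b] .
  then have "k * Inf X \<le> k * x" if "x \<in> X" for x using k that by simp
  then show "k * Inf X \<le> Inf ((\<lambda>l. k * l) ` X)" using ne' by (intro cInf_greatest) auto
  have "Inf ((\<lambda>l. k * l) ` X) / k \<le> x" if "x \<in> X" for x
  proof -
    have "Inf ((\<lambda>l. k * l) ` X) \<le> k * x" using cInf_lower[OF _ b'] that by auto
    then show ?thesis using k by (simp add: divide_le_eq mult.commute)
  qed
  then have "Inf ((\<lambda>l. k * l) ` X) / k \<le> Inf X" using ne by (intro cInf_greatest) auto
  then show "Inf ((\<lambda>l. k * l) ` X) \<le> k * Inf X" using k by (simp add: divide_le_eq mult.commute)
qed

lemma orlicz_scale: assumes a: "0 < a" and f: "f \<in> orlicz (Psi a)" shows "(\<lambda>x. c * f x) \<in> orlicz (Psi a)"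
proof -
  obtain d where fm: "f \<in> borel_measurable lebesgue" and d: "d > 0"
    and fin: "(\<integral>\<^sup>+ x. ennreal (Psi a (d * f x)) \<partial>lebesgue) < \<infinity>"
    using f unfolding orlicz_def by auto
  show ?thesis
  proof (cases "c = 0")
    case True
    then show ?thesis unfolding orlicz_def using Psi_0[OF a] by (auto intro!: exI[of _ 1])
  next
    case False
    have "(\<integral>\<^sup>+ x. ennreal (Psi a (d / \<bar>c\<bar> * (c * f x))) \<partial>lebesgue) = (\<integral>\<^sup>+ x. ennreal (Psi a (d * f x)) \<partial>lebesgue)"
      by (rule nn_integral_cong, rule arg_cong[where f=ennreal], rule Psi_abs_eq) (use False d in \<open>simp add: abs_mult\<close>)
    then show ?thesis unfolding orlicz_def using fm fin d False
      by (auto intro!: exI[of _ "d / \<bar>c\<bar>"])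
  qed
qed

lemma gauge_scale: assumes a: "0 < a" and f: "f \<in> orlicz (Psi a)"
  shows "gauge_norm (Psi a) (\<lambda>x. c * f x) = \<bar>c\<bar> * gauge_norm (Psi a) f"
proof (cases "c = 0")
  case True
  have "SS a (\<lambda>x. c * f x) = {0<..}" unfolding SS_def phi_def using True Psi_0[OF a] by auto
  then show ?thesis using True by (simp add: gauge_SS)
next
  case False
  have fi: "f \<in> borel_measurable lebesgue" "IA f < \<infinity>" "IB f < \<infinity>" using f orlicz_iff[OF a] by auto
  have ph: "phi a (\<lambda>x. c * f x) (\<bar>c\<bar> * l) = phi a f l" if "0 < l" for l
    unfolding phi_def
    by (rule nn_integral_cong, rule arg_cong[where f=ennreal], rule Psi_abs_eq) (use False that in \<open>simp add: abs_mult abs_divide\<close>)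
  have "SS a (\<lambda>x. c * f x) = (\<lambda>l. \<bar>c\<bar> * l) ` SS a f"
  proof (intro set_eqI iffI)
    fix l assume l: "l \<in> SS a (\<lambda>x. c * f x)"
    then have l0: "0 < l" by (rule SS_pos)
    have "l = \<bar>c\<bar> * (l / \<bar>c\<bar>)" using False by simp
    moreover have "l / \<bar>c\<bar> \<in> SS a f"
      using l ph[of "l / \<bar>c\<bar>"] l0 False unfolding SS_def by auto
    ultimately show "l \<in> (\<lambda>l. \<bar>c\<bar> * l) ` SS a f" by blast
  next
    fix l assume "l \<in> (\<lambda>l. \<bar>c\<bar> * l) ` SS a f"
    then obtain k where k: "k \<in> SS a f" "l = \<bar>c\<bar> * k" by auto
    then show "l \<in> SS a (\<lambda>x. c * f x)" using ph[of k] False unfolding SS_def by auto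
  qed
  then show ?thesis unfolding gauge_SS using Inf_scale[of "\<bar>c\<bar>" "SS a f"] False SS_ne[OF a fi] SS_bdd by simp
qed

lemma orlicz_add: assumes a: "0 < a" and f: "f \<in> orlicz (Psi a)" and g: "g \<in> orlicz (Psi a)"
  shows "(\<lambda>x. f x + g x) \<in> orlicz (Psi a)"
proof -
  obtain c1 where fm: "f \<in> borel_measurable lebesgue" and c1: "c1 > 0"
    and fin1: "(\<integral>\<^sup>+ x. ennreal (Psi a (c1 * f x)) \<partial>lebesgue) < \<infinity>"
    using f unfolding orlicz_def by auto
  obtain c2 where gm: "g \<in> borel_measurable lebesgue" and c2: "c2 > 0"
    and fin2: "(\<integral>\<^sup>+ x. ennreal (Psi a (c2 * g x)) \<partial>lebesgue) < \<infinity>"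
    using g unfolding orlicz_def by auto
  define m where "m = min c1 c2"
  have m0: "0 < m" unfolding m_def using c1 c2 by simp
  have pw: "Psi a (m / 2 * (f x + g x)) \<le> Psi a (c1 * f x) + Psi a (c2 * g x)" for x
  proof -
    have "m / 2 * (f x + g x) = (1/2) * (m * f x) + (1 - 1/2) * (m * g x)"
      by (simp add: field_simps)
    then have "Psi a (m / 2 * (f x + g x)) = Psi a ((1/2) * (m * f x) + (1 - 1/2) * (m * g x))"
      by (rule arg_cong)
    also have "\<dots> \<le> (1/2) * Psi a (m * f x) + (1 - 1/2) * Psi a (m * g x)"
      by (rule Psi_conv2[OF a]) auto
    finally have A: "Psi a (m / 2 * (f x + g x)) \<le> (1/2) * Psi a (m * f x) + (1/2) * Psi a (m * g x)" by simp
    have B: "Psi a (m * f x) \<le> Psi a (c1 * f x)"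
      by (rule Psi_mono_abs[OF a]) (use m0 in \<open>auto simp: abs_mult m_def intro!: mult_right_mono\<close>)
    have C: "Psi a (m * g x) \<le> Psi a (c2 * g x)"
      by (rule Psi_mono_abs[OF a]) (use m0 in \<open>auto simp: abs_mult m_def intro!: mult_right_mono\<close>)
    show ?thesis using A B C Psi_nonneg[OF a, of "c1 * f x"] Psi_nonneg[OF a, of "c2 * g x"] by linarith
  qed
  have "(\<integral>\<^sup>+ x. ennreal (Psi a (m / 2 * (f x + g x))) \<partial>lebesgue)
      \<le> (\<integral>\<^sup>+ x. ennreal (Psi a (c1 * f x)) + ennreal (Psi a (c2 * g x)) \<partial>lebesgue)"
    by (rule nn_integral_mono) (use pw Psi_nonneg[OF a] in \<open>simp add: ennreal_plus[symmetric] del: ennreal_plus\<close>)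
  also have "\<dots> = (\<integral>\<^sup>+ x. ennreal (Psi a (c1 * f x)) \<partial>lebesgue) + (\<integral>\<^sup>+ x. ennreal (Psi a (c2 * g x)) \<partial>lebesgue)"
  proof (rule nn_integral_add)
    show "(\<lambda>x. ennreal (Psi a (c1 * f x))) \<in> borel_measurable lebesgue" using fm by measurable
    show "(\<lambda>x. ennreal (Psi a (c2 * g x))) \<in> borel_measurable lebesgue" using gm by measurable
  qed
  also have "\<dots> < \<infinity>" using fin1 fin2 by simp
  finally have "(\<integral>\<^sup>+ x. ennreal (Psi a (m / 2 * (f x + g x))) \<partial>lebesgue) < \<infinity>" .
  moreover have "(\<lambda>x. f x + g x) \<in> borel_measurable lebesgue" using fm gm by measurable
  ultimately show ?thesis unfolding orlicz_def using m0 by (auto intro!: exI[of _ "m / 2"])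
qed

lemma SS_add: assumes a: "0 < a" and fm: "f \<in> borel_measurable lebesgue" and gm: "g \<in> borel_measurable lebesgue"
  and l1: "l1 \<in> SS a f" and l2: "l2 \<in> SS a g"
  shows "l1 + l2 \<in> SS a (\<lambda>x. f x + g x)"
proof -
  have p1: "0 < l1" "phi a f l1 \<le> 1" using l1 unfolding SS_def by auto
  have p2: "0 < l2" "phi a g l2 \<le> 1" using l2 unfolding SS_def by auto
  define u where "u = l1 / (l1 + l2)"
  have u: "0 \<le> u" "u \<le> 1" unfolding u_def using p1 p2 by auto
  have pw: "Psi a ((f x + g x) / (l1 + l2)) \<le> u * Psi a (f x / l1) + (1 - u) * Psi a (g x / l2)" for x
  proof -
    have eq: "(f x + g x) / (l1 + l2) = u * (f x / l1) + (1 - u) * (g x / l2)"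
    proof -
      have s: "0 < l1 + l2" using p1 p2 by simp
      have e1: "u * (f x / l1) = f x / (l1 + l2)" unfolding u_def using p1 s by simp
      have "1 - u = l2 / (l1 + l2)" unfolding u_def using s by (simp add: field_simps)
      then have e2: "(1 - u) * (g x / l2) = g x / (l1 + l2)" using p2 s by simp
      show ?thesis unfolding e1 e2 by (simp add: add_divide_distrib)
    qed
    show ?thesis unfolding eq by (rule Psi_conv2[OF a u])
  qed
  have "phi a (\<lambda>x. f x + g x) (l1 + l2) \<le> (\<integral>\<^sup>+ x. ennreal u * ennreal (Psi a (f x / l1)) + ennreal (1 - u) * ennreal (Psi a (g x / l2)) \<partial>lebesgue)"
    unfolding phi_def
  proof (rule nn_integral_mono)
    fix x
    have "ennreal (Psi a ((f x + g x) / (l1 + l2))) \<le> ennreal (u * Psi a (f x / l1) + (1 - u) * Psi a (g x / l2))"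
      by (rule ennreal_leI) (rule pw)
    also have "\<dots> = ennreal u * ennreal (Psi a (f x / l1)) + ennreal (1 - u) * ennreal (Psi a (g x / l2))"
      using u Psi_nonneg[OF a] by (intro enn_sum_eq) auto
    finally show "ennreal (Psi a ((f x + g x) / (l1 + l2))) \<le> ennreal u * ennreal (Psi a (f x / l1)) + ennreal (1 - u) * ennreal (Psi a (g x / l2))" .
  qed
  also have "\<dots> = (\<integral>\<^sup>+ x. ennreal u * ennreal (Psi a (f x / l1)) \<partial>lebesgue) + (\<integral>\<^sup>+ x. ennreal (1 - u) * ennreal (Psi a (g x / l2)) \<partial>lebesgue)"
  proof (rule nn_integral_add)
    show "(\<lambda>x. ennreal u * ennreal (Psi a (f x / l1))) \<in> borel_measurable lebesgue" using fm by measurable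
    show "(\<lambda>x. ennreal (1 - u) * ennreal (Psi a (g x / l2))) \<in> borel_measurable lebesgue" using gm by measurable
  qed
  also have "\<dots> = ennreal u * phi a f l1 + ennreal (1 - u) * phi a g l2"
  proof -
    have m1: "(\<lambda>x. ennreal (Psi a (f x / l1))) \<in> borel_measurable lebesgue" using fm by measurable
    have m2: "(\<lambda>x. ennreal (Psi a (g x / l2))) \<in> borel_measurable lebesgue" using gm by measurable
    show ?thesis unfolding phi_def
      using nn_integral_cmult[OF m1, of "ennreal u"] nn_integral_cmult[OF m2, of "ennreal (1 - u)"]
      by (simp only:)
  qed
  also have "\<dots> \<le> ennreal u * 1 + ennreal (1 - u) * 1"
    by (intro add_mono mult_left_mono) (use p1 p2 in auto)
  also have "\<dots> = 1" using u by (simp add: ennreal_plus[symmetric] del: ennreal_plus)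
  finally show ?thesis unfolding SS_def using p1 p2 by auto
qed

lemma gauge_add: assumes a: "0 < a" and f: "f \<in> orlicz (Psi a)" and g: "g \<in> orlicz (Psi a)"
  shows "gauge_norm (Psi a) (\<lambda>x. f x + g x) \<le> gauge_norm (Psi a) f + gauge_norm (Psi a) g"
proof -
  have fi: "f \<in> borel_measurable lebesgue" "IA f < \<infinity>" "IB f < \<infinity>" using f orlicz_iff[OF a] by auto
  have gi: "g \<in> borel_measurable lebesgue" "IA g < \<infinity>" "IB g < \<infinity>" using g orlicz_iff[OF a] by auto
  show ?thesis unfolding gauge_SS
  proof (rule field_le_epsilon)
    fix e :: real assume e: "0 < e"
    have "Inf (SS a f) + e/2 \<in> SS a f" using SS_gt[OF a SS_ne[OF a fi]] e by simp
    moreover have "Inf (SS a g) + e/2 \<in> SS a g" using SS_gt[OF a SS_ne[OF a gi]] e by simp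
    ultimately have "(Inf (SS a f) + e/2) + (Inf (SS a g) + e/2) \<in> SS a (\<lambda>x. f x + g x)"
      by (rule SS_add[OF a fi(1) gi(1)])
    then have "Inf (SS a (\<lambda>x. f x + g x)) \<le> (Inf (SS a f) + e/2) + (Inf (SS a g) + e/2)"
      using cInf_lower[OF _ SS_bdd] by blast
    then show "Inf (SS a (\<lambda>x. f x + g x)) \<le> Inf (SS a f) + Inf (SS a g) + e" by simp
  qed
qed

lemma root_le: fixes x y :: real assumes n: "0 < n" and x: "0 \<le> x" and y: "0 \<le> y" and le: "x \<le> y ^ n"
  shows "x powr (1 / real n) \<le> y"
proof -
  have "x powr (1 / real n) \<le> (y ^ n) powr (1 / real n)" using x le by (intro powr_mono2) auto
  also have "(y ^ n) powr (1 / real n) = y"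
  proof (cases "y = 0")
    case True then show ?thesis using n by simp
  next
    case False
    then have yp: "0 < y" using y by simp
    have "(y ^ n) powr (1 / real n) = (y powr real n) powr (1 / real n)" using yp by (simp add: powr_realpow)
    also have "\<dots> = y" using n yp by (simp add: powr_powr)
    finally show ?thesis .
  qed
  finally show ?thesis .
qed

lemma pow_root: fixes x :: real assumes n: "0 < n" and x: "0 \<le> x" shows "(x powr (1 / real n)) ^ n = x"
proof (cases "x = 0")
  case True then show ?thesis using n by simp
next
  case False
  then have xp: "0 < x" using x by simp
  have "(x powr (1 / real n)) ^ n = (x powr (1 / real n)) powr real n" using xp by (simp add: powr_realpow)
  also have "\<dots> = x" using n xp by (simp add: powr_powr)
  finally show ?thesis .
qed

lemma inf_bound: fixes S :: "real set" assumes ne: "S \<noteq> {}" and K: "0 < K" and h: "\<And>l. l \<in> S \<Longrightarrow> v \<le> K * l"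
  shows "v \<le> K * Inf S"
proof -
  have "v / K \<le> Inf S" using ne h K by (intro cInf_greatest) (auto simp: divide_le_eq mult.commute)
  then show ?thesis using K by (simp add: divide_le_eq mult.commute)
qed

lemma Lp2_eq: "Lp_norm 2 f = enn2real (IA f) powr (1 / real (2::nat))"
  unfolding Lp_norm_def IA_def by simp
lemma Lp3_eq: "Lp_norm 3 f = enn2real (IB f) powr (1 / real (3::nat))"
  unfolding Lp_norm_def IB_def by simp

lemma L2_bound: assumes a: "0 < a" and f: "f \<in> orlicz (Psi a)"
  shows "Lp_norm 2 f \<le> 3 * a powr (-1/2) * gauge_norm (Psi a) f"
proof -
  have fi: "f \<in> borel_measurable lebesgue" "IA f < \<infinity>" "IB f < \<infinity>" using f orlicz_iff[OF a] by auto
  have ap: "a powr (-1/2) = 1 / sqrt a" using a by (simp add: powr_minus_divide powr_half_sqrt)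
  have K: "0 < 3 * a powr (-1/2)" using a by simp
  show ?thesis unfolding gauge_SS
  proof (rule inf_bound[OF SS_ne[OF a fi] K])
    fix l assume l: "l \<in> SS a f"
    have l0: "0 < l" using SS_pos[OF l] .
    define A where "A = enn2real (IA f)"
    have A0: "0 \<le> A" unfolding A_def by simp
    have "a / (6 * l^2) * A \<le> 1" using SS_S2(1)[OF a fi l] unfolding A_def .
    then have "A \<le> 6 * l^2 / a" using a l0 by (simp add: field_simps)
    also have "\<dots> \<le> 9 * l^2 / a" using a by (simp add: divide_right_mono)
    also have "\<dots> = (3 * l / sqrt a)^2" using a by (simp add: power_divide power_mult_distrib)
    finally have "A powr (1 / real (2::nat)) \<le> 3 * l / sqrt a"
      by (intro root_le) (use A0 l0 a in auto)
    then show "Lp_norm 2 f \<le> 3 * a powr (-1/2) * l" unfolding Lp2_eq A_def[symmetric] ap by simp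
  qed
qed

lemma L3_bound: assumes a: "0 < a" and f: "f \<in> orlicz (Psi a)"
  shows "Lp_norm 3 f \<le> 2 * gauge_norm (Psi a) f"
proof -
  have fi: "f \<in> borel_measurable lebesgue" "IA f < \<infinity>" "IB f < \<infinity>" using f orlicz_iff[OF a] by auto
  show ?thesis unfolding gauge_SS
  proof (rule inf_bound[OF SS_ne[OF a fi]])
    fix l assume l: "l \<in> SS a f"
    have l0: "0 < l" using SS_pos[OF l] .
    define B where "B = enn2real (IB f)"
    have B0: "0 \<le> B" unfolding B_def by simp
    have "1 / (6 * l^3) * B \<le> 1" using SS_S2(2)[OF a fi l] unfolding B_def .
    then have "B \<le> 6 * l^3" using l0 by (simp add: field_simps)
    also have "\<dots> \<le> 8 * l^3" using l0 by simp
    also have "\<dots> = (2 * l)^3" by (simp add: power_mult_distrib)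
    finally have "B powr (1 / real (3::nat)) \<le> 2 * l"
      by (intro root_le) (use B0 l0 in auto)
    then show "Lp_norm 3 f \<le> 2 * l" unfolding Lp3_eq B_def[symmetric] by simp
  qed simp
qed

lemma upper_bound: assumes a: "0 < a" and f: "f \<in> orlicz (Psi a)"
  shows "gauge_norm (Psi a) f \<le> (2 * (sqrt a + 1)) * max (Lp_norm 2 f) (Lp_norm 3 f)"
proof -
  have fi: "f \<in> borel_measurable lebesgue" "IA f < \<infinity>" "IB f < \<infinity>" using f orlicz_iff[OF a] by auto
  define A where "A = enn2real (IA f)"
  define B where "B = enn2real (IB f)"
  define M where "M = max (Lp_norm 2 f) (Lp_norm 3 f)"
  define K where "K = 2 * (sqrt a + 1)"
  have A0: "0 \<le> A" and B0: "0 \<le> B" unfolding A_def B_def by simp_all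
  have L2: "Lp_norm 2 f = A powr (1 / real (2::nat))" unfolding Lp2_eq A_def ..
  have L3: "Lp_norm 3 f = B powr (1 / real (3::nat))" unfolding Lp3_eq B_def ..
  have L20: "0 \<le> Lp_norm 2 f" and L30: "0 \<le> Lp_norm 3 f" unfolding L2 L3 by simp_all
  have AM: "A \<le> M^2"
  proof -
    have "A = (Lp_norm 2 f)^2" unfolding L2 using pow_root[of 2 A] A0 by simp
    also have "\<dots> \<le> M^2" unfolding M_def using L20 by (intro power_mono) auto
    finally show ?thesis .
  qed
  have BM: "B \<le> M^3"
  proof -
    have "B = (Lp_norm 3 f)^3" unfolding L3 using pow_root[of 3 B] B0 by simp
    also have "\<dots> \<le> M^3" unfolding M_def using L30 by (intro power_mono) auto
    finally show ?thesis .
  qed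
  have M0: "0 \<le> M" unfolding M_def using L20 by simp
  have K2: "2 \<le> K" unfolding K_def using a by simp
  have ne: "SS a f \<noteq> {}" using SS_ne[OF a fi] .
  show ?thesis
  proof (cases "M = 0")
    case True
    then have "A = 0" "B = 0" using AM BM A0 B0 by auto
    then have all: "l \<in> SS a f" if "0 < l" for l
      by (intro SS_S1[OF a fi that]) (simp add: A_def[symmetric] B_def[symmetric])
    have "Inf (SS a f) \<le> 0"
    proof (rule ccontr)
      assume "\<not> Inf (SS a f) \<le> 0"
      then have p: "0 < Inf (SS a f)" by simp
      have "Inf (SS a f) / 2 \<in> SS a f" using all p by simp
      then have "Inf (SS a f) \<le> Inf (SS a f) / 2" using cInf_lower[OF _ SS_bdd] by blast
      then show False using p by simp
    qed
    then show ?thesis unfolding gauge_SS using True M_def by simp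
  next
    case False
    then have Mp: "0 < M" using M0 by simp
    define l where "l = K * M"
    have l0: "0 < l" unfolding l_def using K2 Mp by simp
    have t1: "a / l^2 * A \<le> a / K^2"
    proof -
      have "a / l^2 * A \<le> a / l^2 * M^2" using AM a l0 by (intro mult_left_mono) auto
      also have "\<dots> = a / K^2" unfolding l_def using Mp K2 by (simp add: power_mult_distrib)
      finally show ?thesis .
    qed
    have t2: "1 / l^3 * B \<le> 1 / K^3"
    proof -
      have "1 / l^3 * B \<le> 1 / l^3 * M^3" using BM l0 by (intro mult_left_mono) auto
      also have "\<dots> = 1 / K^3" unfolding l_def using Mp K2 by (simp add: power_mult_distrib)
      finally show ?thesis .
    qed
    have t3: "a / K^2 \<le> 1/4"
    proof -
      have "a = (sqrt a)^2" using a by simp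
      also have "\<dots> \<le> (sqrt a + 1)^2" using a by (intro power_mono) auto
      finally have h: "a \<le> (sqrt a + 1)^2" .
      have "K^2 = 4 * (sqrt a + 1)^2" unfolding K_def by (simp add: power2_eq_square algebra_simps)
      then have "4 * a \<le> K^2" using h by simp
      then show ?thesis using K2 by (simp add: divide_le_eq)
    qed
    have t4: "1 / K^3 \<le> 1/8"
    proof -
      have "(2::real)^3 \<le> K^3" using K2 by (intro power_mono) auto
      then show ?thesis using K2 by (simp add: divide_le_eq)
    qed
    have "a / l^2 * A + 1 / l^3 * B \<le> 1" using t1 t2 t3 t4 by linarith
    then have "l \<in> SS a f" using SS_S1[OF a fi l0] unfolding A_def B_def by simp
    then have "Inf (SS a f) \<le> l" using cInf_lower[OF _ SS_bdd] by blast
    then show ?thesis unfolding gauge_SS l_def K_def M_def by simp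
  qed
qed

theorem lemma3p1:
  shows
   "(\<forall>\<alpha>>0.
      young_function (Psi \<alpha>) \<and>
      strictly_convex_on UNIV (Psi \<alpha>) \<and>
      strict_mono_on {0..} (Psi \<alpha>) \<and>
      C2 (Psi \<alpha>) \<and>
      (\<forall>f\<in>orlicz (Psi \<alpha>). \<not> (AE x in lebesgue. f x = 0) \<longrightarrow>
         gauge_norm (Psi \<alpha>) f > 0 \<and>
         (\<integral>\<^sup>+ x. ennreal (Psi \<alpha> (f x / gauge_norm (Psi \<alpha>) f)) \<partial>lebesgue) = 1 \<and>
         (\<forall>l>0. (\<integral>\<^sup>+ x. ennreal (Psi \<alpha> (f x / l)) \<partial>lebesgue) = 1
                  \<longrightarrow> l = gauge_norm (Psi \<alpha>) f)) \<and>
      (\<forall>f\<in>orlicz (Psi \<alpha>).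
         0 \<le> gauge_norm (Psi \<alpha>) f \<and>
         (gauge_norm (Psi \<alpha>) f = 0 \<longleftrightarrow> (AE x in lebesgue. f x = 0)) \<and>
         (\<forall>c. (\<lambda>x. c * f x) \<in> orlicz (Psi \<alpha>) \<and>
              gauge_norm (Psi \<alpha>) (\<lambda>x. c * f x) = \<bar>c\<bar> * gauge_norm (Psi \<alpha>) f) \<and>
         (\<forall>g\<in>orlicz (Psi \<alpha>). (\<lambda>x. f x + g x) \<in> orlicz (Psi \<alpha>) \<and>
              gauge_norm (Psi \<alpha>) (\<lambda>x. f x + g x)
                \<le> gauge_norm (Psi \<alpha>) f + gauge_norm (Psi \<alpha>) g)) \<and>
      orlicz (Psi \<alpha>) = Lp_space 2 \<inter> Lp_space 3 \<and>
      (\<exists>c C. 0 < c \<and> 0 < C \<and>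
         (\<forall>f\<in>orlicz (Psi \<alpha>).
            c * max (Lp_norm 2 f) (Lp_norm 3 f) \<le> gauge_norm (Psi \<alpha>) f \<and>
            gauge_norm (Psi \<alpha>) f \<le> C * max (Lp_norm 2 f) (Lp_norm 3 f))))
    \<and>
    (\<exists>C>0. \<forall>\<alpha>>0. \<forall>f\<in>orlicz (Psi \<alpha>).
        Lp_norm 2 f \<le> C * \<alpha> powr (-1/2) * gauge_norm (Psi \<alpha>) f \<and>
        Lp_norm 3 f \<le> C * gauge_norm (Psi \<alpha>) f)"
proof -
  have part1: "young_function (Psi \<alpha>) \<and>
      strictly_convex_on UNIV (Psi \<alpha>) \<and>
      strict_mono_on {0..} (Psi \<alpha>) \<and>
      C2 (Psi \<alpha>) \<and>
      (\<forall>f\<in>orlicz (Psi \<alpha>). \<not> (AE x in lebesgue. f x = 0) \<longrightarrow>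
         gauge_norm (Psi \<alpha>) f > 0 \<and>
         (\<integral>\<^sup>+ x. ennreal (Psi \<alpha> (f x / gauge_norm (Psi \<alpha>) f)) \<partial>lebesgue) = 1 \<and>
         (\<forall>l>0. (\<integral>\<^sup>+ x. ennreal (Psi \<alpha> (f x / l)) \<partial>lebesgue) = 1
                  \<longrightarrow> l = gauge_norm (Psi \<alpha>) f)) \<and>
      (\<forall>f\<in>orlicz (Psi \<alpha>).
         0 \<le> gauge_norm (Psi \<alpha>) f \<and>
         (gauge_norm (Psi \<alpha>) f = 0 \<longleftrightarrow> (AE x in lebesgue. f x = 0)) \<and>
         (\<forall>c. (\<lambda>x. c * f x) \<in> orlicz (Psi \<alpha>) \<and>
              gauge_norm (Psi \<alpha>) (\<lambda>x. c * f x) = \<bar>c\<bar> * gauge_norm (Psi \<alpha>) f) \<and>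
         (\<forall>g\<in>orlicz (Psi \<alpha>). (\<lambda>x. f x + g x) \<in> orlicz (Psi \<alpha>) \<and>
              gauge_norm (Psi \<alpha>) (\<lambda>x. f x + g x)
                \<le> gauge_norm (Psi \<alpha>) f + gauge_norm (Psi \<alpha>) g)) \<and>
      orlicz (Psi \<alpha>) = Lp_space 2 \<inter> Lp_space 3 \<and>
      (\<exists>c C. 0 < c \<and> 0 < C \<and>
         (\<forall>f\<in>orlicz (Psi \<alpha>).
            c * max (Lp_norm 2 f) (Lp_norm 3 f) \<le> gauge_norm (Psi \<alpha>) f \<and>
            gauge_norm (Psi \<alpha>) f \<le> C * max (Lp_norm 2 f) (Lp_norm 3 f)))"
    if a: "\<alpha> > 0" for \<alpha> :: real
  proof (intro conjI)
    show "young_function (Psi \<alpha>)" by (rule Psi_young[OF a])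
    show "strictly_convex_on UNIV (Psi \<alpha>)" by (rule Psi_strictly_convex[OF a])
    show "strict_mono_on {0..} (Psi \<alpha>)" by (rule Psi_smono[OF a])
    show "C2 (Psi \<alpha>)" by (rule Psi_C2[OF a])
    show "orlicz (Psi \<alpha>) = Lp_space 2 \<inter> Lp_space 3" by (rule orlicz_Lp[OF a])
    show "\<forall>f\<in>orlicz (Psi \<alpha>). \<not> (AE x in lebesgue. f x = 0) \<longrightarrow>
         gauge_norm (Psi \<alpha>) f > 0 \<and>
         (\<integral>\<^sup>+ x. ennreal (Psi \<alpha> (f x / gauge_norm (Psi \<alpha>) f)) \<partial>lebesgue) = 1 \<and>
         (\<forall>l>0. (\<integral>\<^sup>+ x. ennreal (Psi \<alpha> (f x / l)) \<partial>lebesgue) = 1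
                  \<longrightarrow> l = gauge_norm (Psi \<alpha>) f)"
    proof (intro ballI impI conjI allI)
      fix f assume f: "f \<in> orlicz (Psi \<alpha>)" and nae: "\<not> (AE x in lebesgue. f x = 0)"
      have fi: "f \<in> borel_measurable lebesgue" "IA f < \<infinity>" "IB f < \<infinity>" using f orlicz_iff[OF a] by auto
      have N0: "0 \<le> Inf (SS \<alpha> f)" using N_nonneg[OF SS_ne[OF a fi]] .
      have Np: "0 < Inf (SS \<alpha> f)" using N0 N_zero_iff[OF a fi] nae by linarith
      show "gauge_norm (Psi \<alpha>) f > 0" unfolding gauge_SS using Np .
      show "(\<integral>\<^sup>+ x. ennreal (Psi \<alpha> (f x / gauge_norm (Psi \<alpha>) f)) \<partial>lebesgue) = 1"
        using phi_N_eq1[OF a fi Np] unfolding gauge_SS phi_def .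
      fix l :: real assume l: "0 < l" and p: "(\<integral>\<^sup>+ x. ennreal (Psi \<alpha> (f x / l)) \<partial>lebesgue) = 1"
      show "l = gauge_norm (Psi \<alpha>) f" unfolding gauge_SS
        by (rule phi_unique[OF a fi Np l]) (use p in \<open>simp add: phi_def\<close>)
    qed
    show "\<forall>f\<in>orlicz (Psi \<alpha>).
         0 \<le> gauge_norm (Psi \<alpha>) f \<and>
         (gauge_norm (Psi \<alpha>) f = 0 \<longleftrightarrow> (AE x in lebesgue. f x = 0)) \<and>
         (\<forall>c. (\<lambda>x. c * f x) \<in> orlicz (Psi \<alpha>) \<and>
              gauge_norm (Psi \<alpha>) (\<lambda>x. c * f x) = \<bar>c\<bar> * gauge_norm (Psi \<alpha>) f) \<and>
         (\<forall>g\<in>orlicz (Psi \<alpha>). (\<lambda>x. f x + g x) \<in> orlicz (Psi \<alpha>) \<and>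
              gauge_norm (Psi \<alpha>) (\<lambda>x. f x + g x)
                \<le> gauge_norm (Psi \<alpha>) f + gauge_norm (Psi \<alpha>) g)"
    proof (intro ballI conjI allI)
      fix f assume f: "f \<in> orlicz (Psi \<alpha>)"
      have fi: "f \<in> borel_measurable lebesgue" "IA f < \<infinity>" "IB f < \<infinity>" using f orlicz_iff[OF a] by auto
      show "0 \<le> gauge_norm (Psi \<alpha>) f" unfolding gauge_SS using N_nonneg[OF SS_ne[OF a fi]] .
      show "(gauge_norm (Psi \<alpha>) f = 0) = (AE x in lebesgue. f x = 0)" unfolding gauge_SS using N_zero_iff[OF a fi] .
      fix c :: real
      show "(\<lambda>x. c * f x) \<in> orlicz (Psi \<alpha>)" by (rule orlicz_scale[OF a f])
      show "gauge_norm (Psi \<alpha>) (\<lambda>x. c * f x) = \<bar>c\<bar> * gauge_norm (Psi \<alpha>) f" by (rule gauge_scale[OF a f])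
    next
      fix f g assume f: "f \<in> orlicz (Psi \<alpha>)" and g: "g \<in> orlicz (Psi \<alpha>)"
      show "(\<lambda>x. f x + g x) \<in> orlicz (Psi \<alpha>)" by (rule orlicz_add[OF a f g])
      show "gauge_norm (Psi \<alpha>) (\<lambda>x. f x + g x) \<le> gauge_norm (Psi \<alpha>) f + gauge_norm (Psi \<alpha>) g"
        by (rule gauge_add[OF a f g])
    qed
    define K where "K = 3 * \<alpha> powr (-1/2) + 2"
    have K: "0 < K" unfolding K_def using a by (simp add: add_nonneg_pos)
    show "\<exists>c C. 0 < c \<and> 0 < C \<and>
         (\<forall>f\<in>orlicz (Psi \<alpha>).
            c * max (Lp_norm 2 f) (Lp_norm 3 f) \<le> gauge_norm (Psi \<alpha>) f \<and>
            gauge_norm (Psi \<alpha>) f \<le> C * max (Lp_norm 2 f) (Lp_norm 3 f))"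
    proof (intro exI conjI ballI)
      show "0 < 1 / K" using K by simp
      show "0 < 2 * (sqrt \<alpha> + 1)" using a by (simp add: add_nonneg_pos)
      fix f assume f: "f \<in> orlicz (Psi \<alpha>)"
      show "gauge_norm (Psi \<alpha>) f \<le> 2 * (sqrt \<alpha> + 1) * max (Lp_norm 2 f) (Lp_norm 3 f)"
        by (rule upper_bound[OF a f])
      have fi: "f \<in> borel_measurable lebesgue" "IA f < \<infinity>" "IB f < \<infinity>" using f orlicz_iff[OF a] by auto
      have N0: "0 \<le> gauge_norm (Psi \<alpha>) f" unfolding gauge_SS using N_nonneg[OF SS_ne[OF a fi]] .
      have e0: "0 \<le> 3 * \<alpha> powr (-1/2)" by simp
      have "Lp_norm 2 f \<le> 3 * \<alpha> powr (-1/2) * gauge_norm (Psi \<alpha>) f" by (rule L2_bound[OF a f])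
      also have "\<dots> \<le> K * gauge_norm (Psi \<alpha>) f" unfolding K_def using N0 by (intro mult_right_mono) auto
      finally have b2: "Lp_norm 2 f \<le> K * gauge_norm (Psi \<alpha>) f" .
      have "Lp_norm 3 f \<le> 2 * gauge_norm (Psi \<alpha>) f" by (rule L3_bound[OF a f])
      also have "\<dots> \<le> K * gauge_norm (Psi \<alpha>) f" unfolding K_def using N0 e0 by (intro mult_right_mono) auto
      finally have b3: "Lp_norm 3 f \<le> K * gauge_norm (Psi \<alpha>) f" .
      have "max (Lp_norm 2 f) (Lp_norm 3 f) \<le> K * gauge_norm (Psi \<alpha>) f" using b2 b3 by simp
      then show "1 / K * max (Lp_norm 2 f) (Lp_norm 3 f) \<le> gauge_norm (Psi \<alpha>) f"
        using K by (simp add: divide_le_eq mult.commute)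
    qed
  qed
  have part2: "\<exists>C>0. \<forall>\<alpha>>0. \<forall>f\<in>orlicz (Psi \<alpha>).
        Lp_norm 2 f \<le> C * \<alpha> powr (-1/2) * gauge_norm (Psi \<alpha>) f \<and>
        Lp_norm 3 f \<le> C * gauge_norm (Psi \<alpha>) f"
  proof (intro exI[of _ 3] conjI allI impI ballI)
    fix \<alpha> :: real and f assume a: "0 < \<alpha>" and f: "f \<in> orlicz (Psi \<alpha>)"
    show "Lp_norm 2 f \<le> 3 * \<alpha> powr (-1/2) * gauge_norm (Psi \<alpha>) f" by (rule L2_bound[OF a f])
    have fi: "f \<in> borel_measurable lebesgue" "IA f < \<infinity>" "IB f < \<infinity>" using f orlicz_iff[OF a] by auto
    have N0: "0 \<le> gauge_norm (Psi \<alpha>) f" unfolding gauge_SS using N_nonneg[OF SS_ne[OF a fi]] .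
    show "Lp_norm 3 f \<le> 3 * gauge_norm (Psi \<alpha>) f" using L3_bound[OF a f] N0 by linarith
  qed simp
  show ?thesis using part1 part2 by blast
qed

end
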